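(* Let $W$ and $V$ be two B-DMCs such that $\lvert\Delta_{V}\rvert \prec_{icx} \lvert\Delta_{W}\rvert$. Then for any $\epsilon\in(0,1)$ and any function $\phi:[0,1]\to\mathbb{R}$ that is convex and increasing on $[0,1]$ with $\phi(0)=0$ and $\phi(1)=1$, we have $\mathcal{A}_{N}^{\phi,\epsilon}(V)\subset\mathcal{A}_{N}^{\phi,\epsilon}(W)$ for all $N=2^n$, $n\ge 1$.
   Context: For a binary-input discrete memoryless channel (B-DMC) $W:\{0,1\}\to\mathcal{Y}$, let $q_W(y)=\tfrac12(W(y|0)+W(y|1))$ and, for $q_W(y)>0$, $\Delta_W(y)=\frac{W(y|0)-W(y|1)}{W(y|0)+W(y|1)}$; $\Delta_W$ denotes the random variable $\Delta_W(Y)$ with $Y\sim q_W$. The polarization transforms are $W^-(y_1y_2|u_1)=\sum_{u_2\in\{0,1\}}\tfrac12 W(y_1|u_1\oplus u_2)W(y_2|u_2)$ (a channel $\{0,1\}\to\mathcal{Y}^2$) and $W^+(y_1y_2u_1|u_2)=\tfrac12 W(y_1|u_1\oplus u_2)W(y_2|u_2)$ (a channel $\{0,1\}\to\mathcal{Y}^2\times\{0,1\}$). For $s=(s_1,\dots,s_n)\in\{+,-\}^n$, $W^s$ is defined recursively by $W^{s_1\cdots s_n}=(W^{s_1\cdots s_{n-1}})^{s_n}$. For $\phi$ convex increasing on $[0,1]$ with $\phi(0)=0,\phi(1)=1$ and $\epsilon\in(0,1)$, the information set is $\mathcal{A}_{N}^{\phi,\epsilon}(W)=\{s\in\{+,-\}^n:\mathbb{E}[\phi(\lvert\Delta_{W^s}\rvert)]\ge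 1-\epsilon\}$, $N=2^n$. For real random variables, $X\prec_{icx}Y$ means $\mathbb{E}[\psi(X)]\le\mathbb{E}[\psi(Y)]$ for every increasing convex $\psi$ for which the expectations exist. *)

theory Defs
  imports "HOL-Probability.Probability"
begin

text \<open>Bits: 0 = False, 1 = True; XOR is (\<noteq>).
 A B-DMC with output alphabet 'y is a map bool \<Rightarrow> 'y pmf (W u = law of the output given input u).\<close>

type_synonym 'y bdmc = "bool \<Rightarrow> 'y pmf"

definition is_bdmc :: "'y bdmc \<Rightarrow> bool" where
  "is_bdmc W \<longleftrightarrow> finite (set_pmf (W False)) \<and> finite (set_pmf (W True))"

text \<open>Output alphabet of polarized channels: Base y (original outputs),
 MinusOut y1 y2 (outputs of W^-), PlusOut y1 y2 u1 (outputs of W^+).\<close>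
datatype 'y pout = Base 'y | MinusOut "'y pout" "'y pout" | PlusOut "'y pout" "'y pout" bool

datatype polsign = SPlus | SMinus

definition lift_ch :: "'y bdmc \<Rightarrow> 'y pout bdmc" where
  "lift_ch W = (\<lambda>u. map_pmf Base (W u))"

definition minus_ch :: "'y pout bdmc \<Rightarrow> 'y pout bdmc" where
  "minus_ch W = (\<lambda>u1. bind_pmf (bernoulli_pmf (1/2)) (\<lambda>u2.
      bind_pmf (W (u1 \<noteq> u2)) (\<lambda>y1. map_pmf (\<lambda>y2. MinusOut y1 y2) (W u2))))"

definition plus_ch :: "'y pout bdmc \<Rightarrow> 'y pout bdmc" where
  "plus_ch W = (\<lambda>u2. bind_pmf (bernoulli_pmf (1/2)) (\<lambda>u1.
      bind_pmf (W (u1 \<noteq> u2)) (\<lambda>y1. map_pmf (\<lambda>y2. PlusOut y1 y2 u1) (W u2))))"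

definition pol_step :: "'y pout bdmc \<Rightarrow> polsign \<Rightarrow> 'y pout bdmc" where
  "pol_step W c = (case c of SPlus \<Rightarrow> plus_ch W | SMinus \<Rightarrow> minus_ch W)"

text \<open>W^{s_1...s_n} = (W^{s_1...s_{n-1}})^{s_n}: s_1 is applied first.\<close>
definition polarize :: "'y bdmc \<Rightarrow> polsign list \<Rightarrow> 'y pout bdmc" where
  "polarize W s = foldl pol_step (lift_ch W) s"

definition q_ch :: "'y bdmc \<Rightarrow> 'y pmf" where
  "q_ch W = bind_pmf (bernoulli_pmf (1/2)) W"

definition Delta :: "'y bdmc \<Rightarrow> 'y \<Rightarrow> real" where
  "Delta W y = (pmf (W False) y - pmf (W True) y) / (pmf (W False) y + pmf (W True) y)"

definition absDelta_law :: "'y bdmc \<Rightarrow> real pmf" where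
  "absDelta_law W = map_pmf (\<lambda>y. \<bar>Delta W y\<bar>) (q_ch W)"

definition icx_le :: "real pmf \<Rightarrow> real pmf \<Rightarrow> bool" where
  "icx_le X Y \<longleftrightarrow> (\<forall>\<psi>::real \<Rightarrow> real. mono \<psi> \<and> convex_on UNIV \<psi> \<and>
      integrable (measure_pmf X) \<psi> \<and> integrable (measure_pmf Y) \<psi> \<longrightarrow>
      measure_pmf.expectation X \<psi> \<le> measure_pmf.expectation Y \<psi>)"

definition info_set :: "nat \<Rightarrow> (real \<Rightarrow> real) \<Rightarrow> real \<Rightarrow> 'y bdmc \<Rightarrow> polsign list set" where
  "info_set n \<phi> \<epsilon> W = {s. length s = n \<and>
      measure_pmf.expectation (q_ch (polarize W s)) (\<lambda>y. \<phi> \<bar>Delta (polarize W s) y\<bar>) \<ge> 1 - \<epsilon>}"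

end

theory Submission
  imports Defs
begin


lemma persp:
  fixes psi :: "real \<Rightarrow> real"
  assumes cv: "convex_on {-1..1} psi" and l: "0 \<le> l" "l \<le> 1"
   and h1: "\<bar>u1\<bar> \<le> t1" and h2: "\<bar>u2\<bar> \<le> t2"
  shows "((1-l)*t1 + l*t2) * psi (((1-l)*u1 + l*u2)/((1-l)*t1 + l*t2))
     \<le> (1-l)*(t1*psi(u1/t1)) + l*(t2*psi(u2/t2))"
proof -
  define t where "t = (1-l)*t1 + l*t2"
  have t1: "t1 \<ge> 0" using h1 by linarith
  have t2: "t2 \<ge> 0" using h2 by linarith
  have p1: "(1-l)*t1 \<ge> 0" using t1 l by simp
  have p2: "l*t2 \<ge> 0" using t2 l by simp
  show ?thesis
  proof (cases "t = 0")
    case True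
    then have "(1-l)*t1 = 0" "l*t2 = 0" using p1 p2 t_def by linarith+
    then have z1: "(1-l)*(t1*psi(u1/t1)) = 0" and z2: "l*(t2*psi(u2/t2)) = 0"
      by (metis mult.assoc mult_zero_left)+
    show ?thesis unfolding z1 z2 using True t_def by simp
  next
    case False
    then have tp: "t > 0" using p1 p2 t_def by linarith
    define x1 where "x1 = u1/t1"
    define x2 where "x2 = u2/t2"
    have e1: "(1-l)*u1 = ((1-l)*t1) * x1"
      using h1 by (cases "t1 = 0") (auto simp: x1_def)
    have e2: "l*u2 = (l*t2) * x2"
      using h2 by (cases "t2 = 0") (auto simp: x2_def)
    have x1r: "x1 \<in> {-1..1}"
      using h1 t1 by (cases "t1 = 0") (auto simp: x1_def abs_le_iff field_simps)
    have x2r: "x2 \<in> {-1..1}"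
      using h2 t2 by (cases "t2 = 0") (auto simp: x2_def abs_le_iff field_simps)
    define al where "al = l*t2/t"
    have al0: "0 \<le> al" using p2 tp by (simp add: al_def)
    have al1: "al \<le> 1" using p1 p2 tp by (simp add: al_def t_def)
    have oma: "1 - al = (1-l)*t1/t" using tp by (simp add: al_def t_def field_simps)
    have arg: "((1-l)*u1 + l*u2)/t = (1-al)*x1 + al*x2"
    proof -
      have "(1-al)*x1 + al*x2 = (((1-l)*t1)*x1 + (l*t2)*x2)/t"
        by (simp only: oma) (simp add: al_def add_divide_distrib)
      then show ?thesis by (simp only: e1 e2 t_def)
    qed
    have "psi ((1-al)*x1 + al*x2) \<le> (1-al)*psi x1 + al*psi x2"
      using convex_onD[OF cv al0 al1 x1r x2r] by simp
    then have "t * psi ((1-al)*x1 + al*x2) \<le> t*((1-al)*psi x1 + al*psi x2)"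
      using tp by simp
    also have "\<dots> = (t*(1-al))*psi x1 + (t*al)*psi x2" by (simp add: algebra_simps)
    also have "t*al = l*t2" using tp by (simp add: al_def)
    also have "t*(1-al) = (1-l)*t1" using oma tp by simp
    also have "(1-l)*t1*psi x1 + l*t2*psi x2 = (1-l)*(t1*psi x1) + l*(t2*psi x2)" by simp
    finally show ?thesis using arg by (simp add: t_def x1_def x2_def)
  qed
qed

definition Cls :: "(real \<Rightarrow> real) \<Rightarrow> bool" where
  "Cls g \<longleftrightarrow> mono_on {0..1} g \<and> convex_on {0..1} g"

lemma absconv:
  assumes "Cls g"
  shows "convex_on {-1..1} (\<lambda>x. g \<bar>x\<bar>)"
proof (rule convex_onI)
  fix t x y :: real
  assume t: "0 < t" "t < 1" and x: "x \<in> {-1..1}" and y: "y \<in> {-1..1}"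
  have m: "mono_on {0..1} g" and c: "convex_on {0..1} g" using assms by (auto simp: Cls_def)
  have "\<bar>(1-t)*x + t*y\<bar> \<le> \<bar>(1-t)*x\<bar> + \<bar>t*y\<bar>" by (rule abs_triangle_ineq)
  also have "\<dots> = (1-t)*\<bar>x\<bar> + t*\<bar>y\<bar>" using t by (simp add: abs_mult)
  finally have le: "\<bar>(1-t)*x + t*y\<bar> \<le> (1-t)*\<bar>x\<bar> + t*\<bar>y\<bar>" .
  have ax: "\<bar>x\<bar> \<in> {0..1}" "\<bar>y\<bar> \<in> {0..1}" using x y by auto
  have "(1-t)*\<bar>x\<bar> + t*\<bar>y\<bar> \<le> (1-t)*1 + t*1"
    using ax t by (intro add_mono mult_left_mono) auto
  then have r: "(1-t)*\<bar>x\<bar> + t*\<bar>y\<bar> \<in> {0..1}" using t by auto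
  have r2: "\<bar>(1-t)*x + t*y\<bar> \<in> {0..1}" using le r by auto
  have "g \<bar>(1-t)*x + t*y\<bar> \<le> g ((1-t)*\<bar>x\<bar> + t*\<bar>y\<bar>)"
    using mono_onD[OF m r2 r le] by auto
  also have "\<dots> \<le> (1-t)*g \<bar>x\<bar> + t*g \<bar>y\<bar>"
    using convex_onD[OF c, of t "\<bar>x\<bar>" "\<bar>y\<bar>"] t ax by simp
  finally show "g \<bar>(1 - t) *\<^sub>R x + t *\<^sub>R y\<bar> \<le> (1 - t) * g \<bar>x\<bar> + t * g \<bar>y\<bar>" by simp
qed (auto)

lemma even_convex_mono:
  fixes f :: "real \<Rightarrow> real"
  assumes c: "convex_on {-1..1} f" and e: "\<And>a. f (-a) = f a"
  shows "mono_on {0..1} f"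
proof (rule mono_onI)
  fix a1 a2 :: real assume a1: "a1 \<in> {0..1}" and a2: "a2 \<in> {0..1}" and le: "a1 \<le> a2"
  show "f a1 \<le> f a2"
  proof (cases "a2 = 0")
    case True then show ?thesis using a1 le by auto
  next
    case False
    then have a2p: "a2 > 0" using a2 by auto
    define l where "l = (a2 - a1)/(2*a2)"
    have l0: "0 \<le> l" using a2p le by (simp add: l_def)
    have l1: "l \<le> 1" using a2p a1 by (simp add: l_def field_simps)
    have "a1 = (1-l)*a2 + l*(-a2)" using a2p by (simp add: l_def field_simps)
    then have "f a1 = f ((1-l) *\<^sub>R a2 + l *\<^sub>R (-a2))" by simp
    also have "\<dots> \<le> (1-l)*f a2 + l*f (-a2)"
      using convex_onD[OF c l0 l1, of a2 "-a2"] a2 by auto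
    also have "\<dots> = f a2" using e by (simp add: algebra_simps)
    finally show ?thesis .
  qed
qed

definition Fk :: "(real \<Rightarrow> real) \<Rightarrow> real \<Rightarrow> real \<Rightarrow> real" where
  "Fk g a b = ((1 + a*b) * g \<bar>(a+b)/(1+a*b)\<bar> + (1 - a*b) * g \<bar>(a-b)/(1-a*b)\<bar>)/2"

definition Gk :: "(real \<Rightarrow> real) \<Rightarrow> real \<Rightarrow> real \<Rightarrow> real" where
  "Gk g a b = g \<bar>a*b\<bar>"

lemma Fk_sym: "Fk g a b = Fk g b a"
  unfolding Fk_def by (simp add: algebra_simps abs_minus_commute)

lemma Fk_neg1: "Fk g (-a) b = Fk g a b"
proof -
  have h: "1 + -a*b = 1 - a*b" "1 - -a*b = 1 + a*b" "\<bar>-a+b\<bar> = \<bar>a-b\<bar>" "\<bar>-a-b\<bar> = \<bar>a+b\<bar>"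
    by auto
  have "Fk g (-a) b = ((1 - a*b) * g (\<bar>a-b\<bar>/\<bar>1-a*b\<bar>) + (1+a*b)*g(\<bar>a+b\<bar>/\<bar>1+a*b\<bar>))/2"
    unfolding Fk_def abs_divide h ..
  also have "\<dots> = Fk g a b" unfolding Fk_def abs_divide by (simp add: add.commute)
  finally show ?thesis .
qed

lemma Fk_abs: "Fk g (\<bar>a\<bar>) (\<bar>b\<bar>) = Fk g a b"
proof -
  have "Fk g (\<bar>a\<bar>) b = Fk g a b" by (cases "a \<ge> 0") (auto simp: Fk_neg1)
  moreover have "Fk g (\<bar>a\<bar>) (\<bar>b\<bar>) = Fk g (\<bar>a\<bar>) b"
    by (cases "b \<ge> 0") (auto simp: Fk_neg1 Fk_sym[of g "(\<bar>a\<bar>)"])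
  ultimately show ?thesis by simp
qed

lemma range_ineq:
  fixes a b :: real
  assumes "a \<in> {-1..1}" "b \<in> {-1..1}"
  shows "\<bar>a+b\<bar> \<le> 1 + a*b" "\<bar>a-b\<bar> \<le> 1 - a*b"
proof -
  have "(1-a)*(1-b) \<ge> 0" "(1+a)*(1+b) \<ge> 0" "(1-a)*(1+b) \<ge> 0" "(1+a)*(1-b) \<ge> 0"
    using assms by (auto intro!: mult_nonneg_nonneg)
  then show "\<bar>a+b\<bar> \<le> 1 + a*b" "\<bar>a-b\<bar> \<le> 1 - a*b"
    by (auto simp: abs_le_iff algebra_simps)
qed

lemma Fk_convex:
  assumes g: "Cls g" and b: "b \<in> {-1..1}"
  shows "convex_on {-1..1} (\<lambda>a. Fk g a b)"
proof (rule convex_onI)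
  fix l a1 a2 :: real
  assume l: "0 < l" "l < 1" and a1: "a1 \<in> {-1..1}" and a2: "a2 \<in> {-1..1}"
  define psi where "psi = (\<lambda>x. g \<bar>x\<bar>)"
  have cv: "convex_on {-1..1} psi" unfolding psi_def by (rule absconv[OF g])
  have A: "((1-l)*(1+a1*b) + l*(1+a2*b)) * psi (((1-l)*(a1+b) + l*(a2+b))/((1-l)*(1+a1*b) + l*(1+a2*b)))
     \<le> (1-l)*((1+a1*b)*psi((a1+b)/(1+a1*b))) + l*((1+a2*b)*psi((a2+b)/(1+a2*b)))"
    by (rule persp[OF cv]) (use l range_ineq[OF a1 b] range_ineq[OF a2 b] in auto)
  have B: "((1-l)*(1-a1*b) + l*(1-a2*b)) * psi (((1-l)*(a1-b) + l*(a2-b))/((1-l)*(1-a1*b) + l*(1-a2*b)))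
     \<le> (1-l)*((1-a1*b)*psi((a1-b)/(1-a1*b))) + l*((1-a2*b)*psi((a2-b)/(1-a2*b)))"
    by (rule persp[OF cv]) (use l range_ineq[OF a1 b] range_ineq[OF a2 b] in auto)
  have e1: "(1-l)*(1+a1*b) + l*(1+a2*b) = 1 + ((1-l)*a1 + l*a2)*b" by (simp add: algebra_simps)
  have e2: "(1-l)*(1-a1*b) + l*(1-a2*b) = 1 - ((1-l)*a1 + l*a2)*b" by (simp add: algebra_simps)
  have e3: "(1-l)*(a1+b) + l*(a2+b) = ((1-l)*a1 + l*a2) + b" by (simp add: algebra_simps)
  have e4: "(1-l)*(a1-b) + l*(a2-b) = ((1-l)*a1 + l*a2) - b" by (simp add: algebra_simps)
  have FF: "Fk g x b = ((1+x*b)*psi((x+b)/(1+x*b)) + (1-x*b)*psi((x-b)/(1-x*b)))/2" for x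
    by (simp add: Fk_def psi_def)
  have combo: "P \<le> a*P1 + c*P2 \<Longrightarrow> Q \<le> a*Q1 + c*Q2 \<Longrightarrow> (P+Q)/2 \<le> a*((P1+Q1)/2) + c*((P2+Q2)/2)"
    for P Q P1 P2 Q1 Q2 a c :: real
  proof -
    assume h: "P \<le> a*P1 + c*P2" "Q \<le> a*Q1 + c*Q2"
    have eq: "a*((P1+Q1)/2) + c*((P2+Q2)/2) = ((a*P1 + c*P2) + (a*Q1+c*Q2))/2"
      by (simp add: field_simps)
    have "P + Q \<le> (a*P1 + c*P2) + (a*Q1+c*Q2)" using h by (rule add_mono)
    then show ?thesis unfolding eq by (rule divide_right_mono) simp
  qed
  have "Fk g ((1-l)*a1 + l*a2) b \<le> (1-l) * Fk g a1 b + l * Fk g a2 b"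
    unfolding FF by (rule combo[OF A[unfolded e1 e3] B[unfolded e2 e4]])
  then show "Fk g ((1 - l) *\<^sub>R a1 + l *\<^sub>R a2) b \<le> (1 - l) * Fk g a1 b + l * Fk g a2 b" by simp
qed auto

lemma Gk_convex:
  assumes g: "Cls g" and b: "b \<in> {-1..1}"
  shows "convex_on {-1..1} (\<lambda>a. Gk g a b)"
proof (rule convex_onI)
  fix l a1 a2 :: real
  assume l: "0 < l" "l < 1" and a1: "a1 \<in> {-1..1}" and a2: "a2 \<in> {-1..1}"
  have cv: "convex_on {-1..1} (\<lambda>x. g \<bar>x\<bar>)" by (rule absconv[OF g])
  have "\<bar>a1\<bar> * \<bar>b\<bar> \<le> 1" "\<bar>a2\<bar> * \<bar>b\<bar> \<le> 1" using a1 a2 b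
    by (auto intro!: mult_le_one)
  then have r1: "a1*b \<in> {-1..1}" "a2*b \<in> {-1..1}"
    by (auto simp: abs_mult[symmetric] abs_le_iff)
  have "g \<bar>(1-l)*(a1*b) + l*(a2*b)\<bar> \<le> (1-l)*g \<bar>a1*b\<bar> + l*g \<bar>a2*b\<bar>"
    using convex_onD[OF cv, of l "a1*b" "a2*b"] l r1 by simp
  then show "Gk g ((1 - l) *\<^sub>R a1 + l *\<^sub>R a2) b \<le> (1 - l) * Gk g a1 b + l * Gk g a2 b"
    by (simp add: Gk_def algebra_simps)
qed auto

lemma Fk_Cls:
  assumes g: "Cls g" and b: "b \<in> {0..1}"
  shows "Cls (\<lambda>a. Fk g a b)"
proof -
  have c: "convex_on {-1..1} (\<lambda>a. Fk g a b)" using Fk_convex[OF g] b by auto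
  show ?thesis unfolding Cls_def
    using even_convex_mono[OF c Fk_neg1] convex_on_subset[OF c] by auto
qed

lemma Gk_Cls:
  assumes g: "Cls g" and b: "b \<in> {0..1}"
  shows "Cls (\<lambda>a. Gk g a b)"
proof -
  have c: "convex_on {-1..1} (\<lambda>a. Gk g a b)" using Gk_convex[OF g] b by auto
  have e: "\<And>a. Gk g (-a) b = Gk g a b" by (simp add: Gk_def)
  show ?thesis unfolding Cls_def
    using even_convex_mono[OF c e] convex_on_subset[OF c] by auto
qed

lemma Gk_sym: "Gk g a b = Gk g b a" by (simp add: Gk_def mult.commute)



definition good :: "real pmf \<Rightarrow> bool" where
  "good X \<longleftrightarrow> finite (set_pmf X) \<and> set_pmf X \<subseteq> {0..1}"

definition ordC :: "real pmf \<Rightarrow> real pmf \<Rightarrow> bool" where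
  "ordC X Y \<longleftrightarrow> (\<forall>g. Cls g \<longrightarrow> measure_pmf.expectation X g \<le> measure_pmf.expectation Y g)"

lemma exp_sum:
  assumes "finite (set_pmf X)"
  shows "measure_pmf.expectation X f = (\<Sum>b\<in>set_pmf X. f b * pmf X b)"
  by (rule integral_measure_pmf_real) (use assms in auto)

lemma Cls_exp:
  assumes X: "good X" and K: "\<And>b. b \<in> {0..1} \<Longrightarrow> Cls (\<lambda>a. K a b)"
  shows "Cls (\<lambda>a. measure_pmf.expectation X (\<lambda>b. K a b))"
proof -
  let ?S = "set_pmf X"
  have fin: "finite ?S" and sub: "?S \<subseteq> {0..1}" using X by (auto simp: good_def)
  have E: "measure_pmf.expectation X (\<lambda>b. K a b) = (\<Sum>b\<in>?S. K a b * pmf X b)" for a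
    by (rule exp_sum[OF fin])
  have Kb: "mono_on {0..1} (\<lambda>a. K a b)" "convex_on {0..1} (\<lambda>a. K a b)" if "b \<in> ?S" for b
    using K[of b] that sub by (auto simp: Cls_def)
  have m: "mono_on {0..1} (\<lambda>a. \<Sum>b\<in>?S. K a b * pmf X b)"
  proof (rule mono_onI)
    fix x y :: real assume "x \<in> {0..1}" "y \<in> {0..1}" "x \<le> y"
    then show "(\<Sum>b\<in>?S. K x b * pmf X b) \<le> (\<Sum>b\<in>?S. K y b * pmf X b)"
    proof (intro sum_mono mult_right_mono)
      fix b assume "b \<in> ?S"
      from mono_onD[OF Kb(1)[OF this]] show "K x b \<le> K y b" using \<open>x \<in> {0..1}\<close> \<open>y \<in> {0..1}\<close> \<open>x \<le> y\<close> by auto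
    qed auto
  qed
  have c: "convex_on {0..1} (\<lambda>a. \<Sum>b\<in>?S. K a b * pmf X b)"
  proof (rule convex_onI)
    fix t x y :: real assume t: "0 < t" "t < 1" and x: "x \<in> {0..1}" and y: "y \<in> {0..1}"
    have "(\<Sum>b\<in>?S. K ((1-t)*x + t*y) b * pmf X b) \<le> (\<Sum>b\<in>?S. ((1-t)*K x b + t*K y b) * pmf X b)"
    proof (intro sum_mono mult_right_mono)
      fix b assume "b \<in> ?S"
      from convex_onD[OF Kb(2)[OF this], of t x y] t x y
      show "K ((1-t)*x + t*y) b \<le> (1-t)*K x b + t*K y b" by simp
    qed auto
    also have "\<dots> = (1-t)*(\<Sum>b\<in>?S. K x b * pmf X b) + t*(\<Sum>b\<in>?S. K y b * pmf X b)"
      by (simp add: distrib_right mult.assoc sum.distrib sum_distrib_left)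
    finally show "(\<Sum>b\<in>?S. K ((1 - t) *\<^sub>R x + t *\<^sub>R y) b * pmf X b)
        \<le> (1 - t) * (\<Sum>b\<in>?S. K x b * pmf X b) + t * (\<Sum>b\<in>?S. K y b * pmf X b)" by simp
  qed auto
  show ?thesis unfolding E Cls_def using m c by auto
qed

lemma ordC_step:
  assumes X: "good X" and Y: "good Y" and o: "ordC X Y"
    and K: "\<And>b. b \<in> {0..1} \<Longrightarrow> Cls (\<lambda>a. K a b)"
    and sym: "\<And>a b. K a b = K b a"
  shows "measure_pmf.expectation X (\<lambda>a. measure_pmf.expectation X (\<lambda>b. K a b))
      \<le> measure_pmf.expectation Y (\<lambda>a. measure_pmf.expectation Y (\<lambda>b. K a b))"
proof -
  have "measure_pmf.expectation X (\<lambda>a. measure_pmf.expectation X (\<lambda>b. K a b))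
      \<le> measure_pmf.expectation Y (\<lambda>a. measure_pmf.expectation X (\<lambda>b. K a b))"
  proof -
    have "Cls (\<lambda>a. measure_pmf.expectation X (\<lambda>b. K a b))" by (rule Cls_exp[OF X]) (rule K)
    then show ?thesis using o unfolding ordC_def by blast
  qed
  also have "\<dots> \<le> measure_pmf.expectation Y (\<lambda>a. measure_pmf.expectation Y (\<lambda>b. K a b))"
  proof (rule integral_mono_AE)
    show "integrable (measure_pmf Y) (\<lambda>a. measure_pmf.expectation X (\<lambda>b. K a b))"
      "integrable (measure_pmf Y) (\<lambda>a. measure_pmf.expectation Y (\<lambda>b. K a b))"
      using Y by (auto simp: good_def intro: integrable_measure_pmf_finite)
    show "AE a in measure_pmf Y. measure_pmf.expectation X (\<lambda>b. K a b) \<le> measure_pmf.expectation Y (\<lambda>b. K a b)"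
      unfolding AE_measure_pmf_iff
    proof
      fix a assume a: "a \<in> set_pmf Y"
      then have a01: "a \<in> {0..1}" using Y by (auto simp: good_def)
      have eq: "(\<lambda>b. K a b) = (\<lambda>b. K b a)" by (rule ext, rule sym)
      have "Cls (\<lambda>b. K a b)" unfolding eq by (rule K[OF a01])
      then show "measure_pmf.expectation X (\<lambda>b. K a b) \<le> measure_pmf.expectation Y (\<lambda>b. K a b)"
        using o unfolding ordC_def by blast
    qed
  qed
  finally show ?thesis .
qed



lemma chord_ext:
  assumes X: "good X" and Y: "good Y" and g: "Cls g"
  obtains psi where "mono psi" "convex_on UNIV psi"
    "\<And>q. q \<in> set_pmf X \<union> set_pmf Y \<Longrightarrow> psi q = g q"
proof -
  have gm: "mono_on {0..1} g" and gc: "convex_on {0..1} g" using g by (auto simp: Cls_def)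
  define T where "T = set_pmf X \<union> set_pmf Y \<union> {1::real}"
  have finT: "finite T" and subT: "T \<subseteq> {0..1}" and oneT: "1 \<in> T"
    using X Y by (auto simp: T_def good_def)
  define L where "L = {p\<in>T. p < 1}"
  have finL: "finite L" using finT by (simp add: L_def)
  define nxt where "nxt p = Min {q\<in>T. p < q}" for p
  have nxt_in: "nxt p \<in> T" "p < nxt p" if "p \<in> L" for p
  proof -
    have ne: "{q\<in>T. p < q} \<noteq> {}" using oneT that by (auto simp: L_def)
    have "nxt p \<in> {q\<in>T. p < q}" unfolding nxt_def by (rule Min_in) (use finT ne in auto)
    then show "nxt p \<in> T" "p < nxt p" by auto
  qed
  have nxt_le: "nxt p \<le> q" if "p \<in> L" "q \<in> T" "p < q" for p q
    unfolding nxt_def by (rule Min_le) (use finT that in auto)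
  define sl where "sl p = (g (nxt p) - g p) / (nxt p - p)" for p
  define ell where "ell p x = g p + sl p * (x - p)" for p x
  define c0 where "c0 = g (Min T)"
  define psi where "psi x = Max (insert c0 ((\<lambda>p. ell p x) ` L))" for x
  have T01: "q \<in> T \<Longrightarrow> q \<in> {0..1}" for q using subT by auto
  have sl0: "sl p \<ge> 0" if "p \<in> L" for p
  proof -
    have "p \<in> T" using that by (simp add: L_def)
    have "g p \<le> g (nxt p)" using mono_onD[OF gm T01[OF \<open>p \<in> T\<close>] T01[OF nxt_in(1)[OF that]]] nxt_in(2)[OF that] by simp
    then show ?thesis using nxt_in(2)[OF that] by (simp add: sl_def)
  qed
  have fin_set: "finite (insert c0 ((\<lambda>p. ell p x) ` L))" for x using finL by simp
  have psi_ge: "z \<le> psi x" if "z \<in> insert c0 ((\<lambda>p. ell p x) ` L)" for z x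
    unfolding psi_def by (rule Max_ge[OF fin_set that])
  have psi_le: "psi x \<le> R" if "c0 \<le> R" "\<And>p. p \<in> L \<Longrightarrow> ell p x \<le> R" for x R
    unfolding psi_def using that fin_set by (subst Max_le_iff) auto
  have "mono psi"
  proof (rule monoI)
    fix x y :: real assume "x \<le> y"
    show "psi x \<le> psi y"
    proof (rule psi_le)
      show "c0 \<le> psi y" by (rule psi_ge) simp
      fix p assume p: "p \<in> L"
      have "ell p x \<le> ell p y" using sl0[OF p] \<open>x \<le> y\<close> by (simp add: ell_def mult_left_mono)
      also have "\<dots> \<le> psi y" using p by (intro psi_ge) simp
      finally show "ell p x \<le> psi y" .
    qed
  qed
  moreover have "convex_on UNIV psi"
  proof (rule convex_onI)
    fix t x y :: real assume t: "0 < t" "t < 1"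
    show "psi ((1 - t) *\<^sub>R x + t *\<^sub>R y) \<le> (1 - t) * psi x + t * psi y"
    proof (rule psi_le)
      have "c0 = (1-t)*c0 + t*c0" by (simp add: algebra_simps)
      also have "\<dots> \<le> (1-t)*psi x + t*psi y" using t
        by (intro add_mono mult_left_mono psi_ge) auto
      finally show "c0 \<le> (1-t)*psi x + t*psi y" .
      fix p assume p: "p \<in> L"
      have "ell p ((1 - t) *\<^sub>R x + t *\<^sub>R y) = (1-t)*ell p x + t*ell p y"
        by (simp add: ell_def algebra_simps)
      also have "\<dots> \<le> (1-t)*psi x + t*psi y" using t p
        by (intro add_mono mult_left_mono psi_ge) auto
      finally show "ell p ((1 - t) *\<^sub>R x + t *\<^sub>R y) \<le> (1-t)*psi x + t*psi y" .
    qed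
  qed auto
  moreover have "psi q = g q" if q: "q \<in> T" for q
  proof (rule antisym)
    show "psi q \<le> g q"
    proof (rule psi_le)
      have "Min T \<le> q" using finT q by simp
      moreover have "Min T \<in> T" using finT oneT by (intro Min_in) auto
      ultimately show "c0 \<le> g q" unfolding c0_def using mono_onD[OF gm] T01 q by blast
      fix p assume p: "p \<in> L"
      have pT: "p \<in> T" using p by (simp add: L_def)
      define n where "n = nxt p"
      have nT: "n \<in> T" and pn: "p < n" using nxt_in[OF p] by (auto simp: n_def)
      consider "q = p" | "q < p" | "q = n" | "n < q" using nxt_le[OF p q] n_def by force
      then show "ell p q \<le> g q"
      proof cases
        case 1 then show ?thesis by (simp add: ell_def)
      next
        case 2
        have s1: "(g q - g p)/(q - p) \<le> (g q - g n)/(q - n)"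
          by (rule convex_on_slope_le(1)[OF gc T01[OF q] T01[OF nT] 2 pn])
        have s2: "(g q - g n)/(q - n) \<le> (g p - g n)/(p - n)"
          by (rule convex_on_slope_le(2)[OF gc T01[OF q] T01[OF nT] 2 pn])
        have "(g p - g n)/(p - n) = sl p" by (simp add: sl_def n_def divide_simps algebra_simps)
        then have "(g q - g p)/(q - p) \<le> sl p" using s1 s2 by linarith
        then have "sl p * (q - p) \<le> (g q - g p)/(q - p) * (q - p)"
          using 2 by (intro mult_right_mono_neg) auto
        also have "\<dots> = g q - g p" using 2 by simp
        finally show ?thesis by (simp add: ell_def)
      next
        case 3 then show ?thesis using pn by (simp add: ell_def sl_def n_def)
      next
        case 4
        have s1: "(g p - g n)/(p - n) \<le> (g p - g q)/(p - q)"
          by (rule convex_on_slope_le(1)[OF gc T01[OF pT] T01[OF q] pn 4])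
        have "(g p - g n)/(p - n) = sl p" by (simp add: sl_def n_def divide_simps algebra_simps)
        moreover have "(g p - g q)/(p - q) = (g q - g p)/(q - p)" by (simp add: divide_simps algebra_simps)
        ultimately have "sl p \<le> (g q - g p)/(q - p)" using s1 by simp
        then have "sl p * (q - p) \<le> (g q - g p)/(q - p) * (q - p)"
          using 4 pn by (intro mult_right_mono) auto
        also have "\<dots> = g q - g p" using 4 pn by simp
        finally show ?thesis by (simp add: ell_def)
      qed
    qed
  next
    show "g q \<le> psi q"
    proof (cases "q < 1")
      case True
      then have "q \<in> L" using q by (simp add: L_def)
      then have "ell q q \<le> psi q" by (intro psi_ge) simp
      then show ?thesis by (simp add: ell_def)
    next
      case False
      then have q1: "q = 1" using T01[OF q] by auto
      show ?thesis
      proof (cases "L = {}")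
        case True
        then have "T = {1}" using oneT subT by (force simp: L_def)
        then have "c0 = g q" using q1 by (simp add: c0_def)
        then show ?thesis using psi_ge[of c0 q] by simp
      next
        case False
        define p where "p = Max L"
        have p: "p \<in> L" unfolding p_def using finL False by (rule Max_in)
        have "nxt p = 1"
        proof (rule antisym)
          show "nxt p \<le> 1" using nxt_le[OF p oneT] p by (simp add: L_def)
          show "1 \<le> nxt p"
          proof (rule ccontr)
            assume "\<not> 1 \<le> nxt p"
            then have "nxt p \<in> L" using nxt_in(1)[OF p] by (simp add: L_def)
            then have "nxt p \<le> p" unfolding p_def using finL by simp
            then show False using nxt_in(2)[OF p] by simp
          qed
        qed
        then have "ell p 1 = g 1" using p by (simp add: ell_def sl_def L_def)
        moreover have "ell p q \<le> psi q" using p by (intro psi_ge) simp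
        ultimately show ?thesis using q1 by simp
      qed
    qed
  qed
  ultimately show ?thesis using that by (auto simp: T_def)
qed

lemma icx_ordC:
  assumes X: "good X" and Y: "good Y" and i: "icx_le X Y"
  shows "ordC X Y"
  unfolding ordC_def
proof (intro allI impI)
  fix g assume g: "Cls g"
  obtain psi where m: "mono psi" and c: "convex_on UNIV psi"
    and e: "\<And>q. q \<in> set_pmf X \<union> set_pmf Y \<Longrightarrow> psi q = g q"
    using chord_ext[OF X Y g] by blast
  have fX: "finite (set_pmf X)" and fY: "finite (set_pmf Y)" using X Y by (auto simp: good_def)
  have "measure_pmf.expectation X g = measure_pmf.expectation X psi"
    using e by (simp add: exp_sum[OF fX])
  also have "\<dots> \<le> measure_pmf.expectation Y psi"
    using i m c integrable_measure_pmf_finite[OF fX] integrable_measure_pmf_finite[OF fY]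
    unfolding icx_le_def by blast
  also have "\<dots> = measure_pmf.expectation Y g"
    using e by (simp add: exp_sum[OF fY])
  finally show "measure_pmf.expectation X g \<le> measure_pmf.expectation Y g" .
qed



lemma bern_exp: "measure_pmf.expectation (bernoulli_pmf (1/2)) (f :: bool \<Rightarrow> real) = (f False + f True)/2"
proof -
  have "measure_pmf.expectation (bernoulli_pmf (1/2)) f = (\<Sum>b\<in>UNIV. f b * pmf (bernoulli_pmf (1/2)) b)"
    by (rule integral_measure_pmf_real) auto
  also have "\<dots> = (f False + f True)/2" by (simp add: UNIV_bool)
  finally show ?thesis .
qed

lemma exp_sumA:
  fixes f :: "'a \<Rightarrow> real"
  assumes "finite A" "set_pmf M \<subseteq> A"
  shows "measure_pmf.expectation M f = (\<Sum>y\<in>A. f y * pmf M y)"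
  by (rule integral_measure_pmf_real) (use assms in auto)

lemma exp_single: "measure_pmf.expectation M (\<lambda>y. if y = a then (c::real) else 0) = c * pmf M a"
proof -
  have "measure_pmf.expectation M (\<lambda>y. if y = a then c else 0) = (\<Sum>y\<in>{a}. (if y = a then c else 0) * pmf M y)"
    by (rule integral_measure_pmf_real) (auto split: if_splits)
  then show ?thesis by simp
qed

lemma bind_exp:
  fixes f :: "'b \<Rightarrow> real"
  assumes fM: "finite (set_pmf M)" and fN: "\<And>x. x \<in> set_pmf M \<Longrightarrow> finite (set_pmf (N x))"
  shows "measure_pmf.expectation (bind_pmf M N) f = measure_pmf.expectation M (\<lambda>x. measure_pmf.expectation (N x) f)"
proof -
  define S where "S = (\<Union>x\<in>set_pmf M. set_pmf (N x))"
  have fS: "finite S" using fM fN by (auto simp: S_def)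
  have "measure_pmf.expectation (bind_pmf M N) f = (\<Sum>z\<in>S. f z * pmf (bind_pmf M N) z)"
    by (rule exp_sumA[OF fS]) (auto simp: S_def)
  also have "\<dots> = (\<Sum>z\<in>S. f z * (\<Sum>x\<in>set_pmf M. pmf (N x) z * pmf M x))"
    by (simp add: pmf_bind exp_sum[OF fM])
  also have "\<dots> = (\<Sum>z\<in>S. \<Sum>x\<in>set_pmf M. f z * (pmf (N x) z * pmf M x))"
    by (simp add: sum_distrib_left)
  also have "\<dots> = (\<Sum>x\<in>set_pmf M. \<Sum>z\<in>S. f z * (pmf (N x) z * pmf M x))"
    by (rule sum.swap)
  also have "\<dots> = (\<Sum>x\<in>set_pmf M. (\<Sum>z\<in>S. f z * pmf (N x) z) * pmf M x)"
    by (simp add: sum_distrib_right mult.assoc)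
  also have "\<dots> = (\<Sum>x\<in>set_pmf M. measure_pmf.expectation (N x) f * pmf M x)"
    by (intro sum.cong refl arg_cong2[where f="(*)"] exp_sumA[OF fS, symmetric]) (auto simp: S_def)
  also have "\<dots> = measure_pmf.expectation M (\<lambda>x. measure_pmf.expectation (N x) f)"
    by (rule exp_sum[OF fM, symmetric])
  finally show ?thesis .
qed

lemma finite_bern: "finite (set_pmf (bernoulli_pmf p))"
  by (rule finite_subset[of _ UNIV]) auto

lemma fin_plus:
  assumes "finite (set_pmf (U False))" "finite (set_pmf (U True))"
  shows "finite (set_pmf (plus_ch U b))"
proof -
  have "finite (set_pmf (U c))" for c using assms by (cases c) auto
  then show ?thesis unfolding plus_ch_def by (auto intro!: finite_UN_I finite_bern)
qed

lemma fin_minus: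
  assumes "finite (set_pmf (U False))" "finite (set_pmf (U True))"
  shows "finite (set_pmf (minus_ch U b))"
proof -
  have "finite (set_pmf (U c))" for c using assms by (cases c) auto
  then show ?thesis unfolding minus_ch_def by (auto intro!: finite_UN_I finite_bern)
qed

lemma pmf_plus: "pmf (plus_ch U u2) (PlusOut y1 y2 u1) = pmf (U (u1 \<noteq> u2)) y1 * pmf (U u2) y2 / 2"
proof -
  have inner: "pmf (map_pmf (\<lambda>y2. PlusOut y1' y2 u1') (U u2)) (PlusOut y1 y2 u1)
      = (if y1' = y1 then (if u1' = u1 then pmf (U u2) y2 else 0) else 0)" for y1' u1'
  proof (cases "y1' = y1 \<and> u1' = u1")
    case True
    have "inj (\<lambda>y2. PlusOut y1' y2 u1')" by (auto intro: injI)
    then show ?thesis using True pmf_map_inj'[of "\<lambda>y2. PlusOut y1' y2 u1'" "U u2" y2] by simp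
  next
    case False
    then have "PlusOut y1 y2 u1 \<notin> set_pmf (map_pmf (\<lambda>y2. PlusOut y1' y2 u1') (U u2))" by auto
    then show ?thesis using False by (auto simp: pmf_eq_0_set_pmf)
  qed
  show ?thesis
    unfolding plus_ch_def pmf_bind bern_exp inner exp_single
    by (simp add: exp_single)
qed

lemma pmf_minus: "pmf (minus_ch U u1) (MinusOut y1 y2) =
   (pmf (U (u1 \<noteq> False)) y1 * pmf (U False) y2 + pmf (U (u1 \<noteq> True)) y1 * pmf (U True) y2) / 2"
proof -
  have inner: "pmf (map_pmf (\<lambda>y2. MinusOut y1' y2) (U u2)) (MinusOut y1 y2)
      = (if y1' = y1 then pmf (U u2) y2 else 0)" for y1' u2
  proof (cases "y1' = y1")
    case True
    have "inj (\<lambda>y2. MinusOut y1' y2)" by (auto intro: injI)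
    then show ?thesis using True pmf_map_inj'[of "\<lambda>y2. MinusOut y1' y2" "U u2" y2] by simp
  next
    case False
    then have "MinusOut y1 y2 \<notin> set_pmf (map_pmf (\<lambda>y2. MinusOut y1' y2) (U u2))" by auto
    then show ?thesis using False by (auto simp: pmf_eq_0_set_pmf)
  qed
  show ?thesis
    unfolding minus_ch_def pmf_bind bern_exp inner exp_single by simp
qed



lemma ratio2: "k \<noteq> 0 \<Longrightarrow> (2*x/k)/(2*y/k) = (x::real)/y"
  by (cases "y = 0") (auto simp: field_simps)

lemma half_ratio: "((x::real)/2 - y/2)/(x/2 + y/2) = (x-y)/(x+y)"
  by (cases "x + y = 0") (auto simp: field_simps)

lemma plus_alg:
  fixes a0 a1 b0 b1 :: real
  assumes "a0 \<ge> 0" "a1 \<ge> 0" "b0 \<ge> 0" "b1 \<ge> 0"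
  shows "(a0*b0+a1*b1) * g \<bar>(a0*b0/2 - a1*b1/2)/(a0*b0/2 + a1*b1/2)\<bar>
       + (a1*b0+a0*b1) * g \<bar>(a1*b0/2 - a0*b1/2)/(a1*b0/2 + a0*b1/2)\<bar>
       = (a0+a1)*(b0+b1) * Fk g ((a0-a1)/(a0+a1)) ((b0-b1)/(b0+b1))"
proof (cases "a0 + a1 = 0 \<or> b0 + b1 = 0")
  case True
  then have "(a0 = 0 \<and> a1 = 0) \<or> (b0 = 0 \<and> b1 = 0)" using assms by auto
  then show ?thesis by auto
next
  case False
  define s where "s = a0 + a1"
  define t where "t = b0 + b1"
  have sp: "s \<noteq> 0" "t \<noteq> 0" using False by (auto simp: s_def t_def)
  then have st: "s*t \<noteq> 0" by simp
  define D1 where "D1 = (a0-a1)/s"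
  define D2 where "D2 = (b0-b1)/t"
  have d1: "D1 + D2 = 2*(a0*b0 - a1*b1)/(s*t)"
    using sp by (simp add: D1_def D2_def field_simps) (simp add: s_def t_def algebra_simps)
  have d2: "1 + D1*D2 = 2*(a0*b0 + a1*b1)/(s*t)"
    using sp by (simp add: D1_def D2_def field_simps) (simp add: s_def t_def algebra_simps)
  have d3: "D1 - D2 = 2*(a0*b1 - a1*b0)/(s*t)"
    using sp by (simp add: D1_def D2_def field_simps) (simp add: s_def t_def algebra_simps)
  have d4: "1 - D1*D2 = 2*(a1*b0 + a0*b1)/(s*t)"
    using sp by (simp add: D1_def D2_def field_simps) (simp add: s_def t_def algebra_simps)
  have r1: "(D1+D2)/(1+D1*D2) = (a0*b0 - a1*b1)/(a0*b0 + a1*b1)"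
    unfolding d1 d2 by (rule ratio2[OF st])
  have r2: "\<bar>(D1-D2)/(1-D1*D2)\<bar> = \<bar>(a1*b0 - a0*b1)/(a1*b0 + a0*b1)\<bar>"
    unfolding d3 d4 ratio2[OF st]
    by (metis abs_minus_cancel minus_diff_eq minus_divide_left)
  have "Fk g D1 D2 = ((1 + D1*D2) * g \<bar>(D1+D2)/(1+D1*D2)\<bar> + (1 - D1*D2) * g \<bar>(D1-D2)/(1-D1*D2)\<bar>)/2"
    by (simp add: Fk_def)
  also have "\<dots> = (2*(a0*b0 + a1*b1)/(s*t) * g \<bar>(a0*b0 - a1*b1)/(a0*b0 + a1*b1)\<bar>
        + 2*(a1*b0 + a0*b1)/(s*t) * g \<bar>(a1*b0 - a0*b1)/(a1*b0 + a0*b1)\<bar>)/2"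
    by (simp only: r1 r2) (simp only: d2 d4)
  finally have FF: "s*t*Fk g D1 D2 = s*t*((2*(a0*b0 + a1*b1)/(s*t) * g \<bar>(a0*b0 - a1*b1)/(a0*b0 + a1*b1)\<bar>
        + 2*(a1*b0 + a0*b1)/(s*t) * g \<bar>(a1*b0 - a0*b1)/(a1*b0 + a0*b1)\<bar>)/2)" by simp
  have kmul: "k \<noteq> 0 \<Longrightarrow> k*((2*c/k*G1 + 2*d/k*G2)/2) = c*G1 + d*G2" for k c d G1 G2 :: real
    by (simp add: field_simps)
  have F: "s*t*Fk g D1 D2 = (a0*b0 + a1*b1) * g \<bar>(a0*b0 - a1*b1)/(a0*b0 + a1*b1)\<bar>
        + (a1*b0 + a0*b1) * g \<bar>(a1*b0 - a0*b1)/(a1*b0 + a0*b1)\<bar>"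
    unfolding FF by (rule kmul[OF st])
  show ?thesis unfolding half_ratio using F by (simp add: s_def t_def D1_def D2_def)
qed

lemma minus_alg:
  fixes a0 a1 b0 b1 :: real
  assumes "a0 \<ge> 0" "a1 \<ge> 0" "b0 \<ge> 0" "b1 \<ge> 0"
  shows "(a0*b0+a1*b1+a1*b0+a0*b1) *
           g \<bar>((a0*b0 + a1*b1)/2 - (a1*b0 + a0*b1)/2)/((a0*b0 + a1*b1)/2 + (a1*b0 + a0*b1)/2)\<bar>
       = (a0+a1)*(b0+b1) * Gk g ((a0-a1)/(a0+a1)) ((b0-b1)/(b0+b1))"
proof -
  have e: "a0*b0+a1*b1+a1*b0+a0*b1 = (a0+a1)*(b0+b1)" by (simp add: algebra_simps)
  have "((a0*b0 + a1*b1)/2 - (a1*b0 + a0*b1)/2)/((a0*b0 + a1*b1)/2 + (a1*b0 + a0*b1)/2)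
      = ((a0*b0 + a1*b1) - (a1*b0 + a0*b1))/((a0*b0 + a1*b1) + (a1*b0 + a0*b1))"
    by (rule half_ratio)
  also have "\<dots> = ((a0-a1)*(b0-b1))/((a0+a1)*(b0+b1))" by (simp add: algebra_simps)
  also have "\<dots> = (a0-a1)/(a0+a1) * ((b0-b1)/(b0+b1))" by simp
  finally show ?thesis unfolding e Gk_def by simp
qed



lemma pmf_q: "pmf (q_ch U) y = (pmf (U False) y + pmf (U True) y)/2"
  by (simp add: q_ch_def pmf_bind bern_exp)

lemma set_q: "set_pmf (q_ch U) = set_pmf (U False) \<union> set_pmf (U True)"
  by (auto simp: q_ch_def set_pmf_bernoulli UNIV_bool)

lemma dbl:
  fixes k :: "'a \<Rightarrow> 'b \<Rightarrow> real"
  assumes "finite A" "set_pmf M1 \<subseteq> A" "finite B" "set_pmf M2 \<subseteq> B"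
  shows "measure_pmf.expectation M1 (\<lambda>y1. measure_pmf.expectation M2 (\<lambda>y2. k y1 y2))
     = (\<Sum>y1\<in>A. \<Sum>y2\<in>B. k y1 y2 * (pmf M1 y1 * pmf M2 y2))"
proof -
  have "measure_pmf.expectation M1 (\<lambda>y1. measure_pmf.expectation M2 (\<lambda>y2. k y1 y2))
     = (\<Sum>y1\<in>A. (\<Sum>y2\<in>B. k y1 y2 * pmf M2 y2) * pmf M1 y1)"
    using assms by (simp add: exp_sumA)
  also have "\<dots> = (\<Sum>y1\<in>A. \<Sum>y2\<in>B. k y1 y2 * (pmf M1 y1 * pmf M2 y2))"
    by (simp add: sum_distrib_left sum_distrib_right mult_ac)
  finally show ?thesis .
qed

lemma plus_exp:
  fixes h :: "'a pout \<Rightarrow> real"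
  assumes f: "finite (set_pmf (U False))" "finite (set_pmf (U True))"
  shows "measure_pmf.expectation (plus_ch U u2) h =
    (measure_pmf.expectation (U (False \<noteq> u2)) (\<lambda>y1. measure_pmf.expectation (U u2) (\<lambda>y2. h (PlusOut y1 y2 False)))
   + measure_pmf.expectation (U (True \<noteq> u2)) (\<lambda>y1. measure_pmf.expectation (U u2) (\<lambda>y2. h (PlusOut y1 y2 True))))/2"
proof -
  have fU: "finite (set_pmf (U c))" for c using f by (cases c) auto
  show ?thesis unfolding plus_ch_def
    by (simp add: bind_exp finite_bern fU bern_exp)
qed

lemma minus_exp:
  fixes h :: "'a pout \<Rightarrow> real"
  assumes f: "finite (set_pmf (U False))" "finite (set_pmf (U True))"
  shows "measure_pmf.expectation (minus_ch U u1) h =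
    (measure_pmf.expectation (U (u1 \<noteq> False)) (\<lambda>y1. measure_pmf.expectation (U False) (\<lambda>y2. h (MinusOut y1 y2)))
   + measure_pmf.expectation (U (u1 \<noteq> True)) (\<lambda>y1. measure_pmf.expectation (U True) (\<lambda>y2. h (MinusOut y1 y2))))/2"
proof -
  have fU: "finite (set_pmf (U c))" for c using f by (cases c) auto
  show ?thesis unfolding minus_ch_def
    by (simp add: bind_exp finite_bern fU bern_exp)
qed

lemma qch_exp:
  fixes h :: "'a \<Rightarrow> real"
  assumes "\<And>b. finite (set_pmf (U b))"
  shows "measure_pmf.expectation (q_ch U) h = (measure_pmf.expectation (U False) h + measure_pmf.expectation (U True) h)/2"
  unfolding q_ch_def using assms by (simp add: bind_exp finite_bern bern_exp)



lemma point4: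
  fixes a0 a1 b0 b1 GF GT F :: real
  assumes H: "(a0*b0+a1*b1)*GF + (a1*b0+a0*b1)*GT = (a0+a1)*(b0+b1)*F"
  shows "F * ((a0+a1)/2 * ((b0+b1)/2)) = ((GF*(a0*b0) + GT*(a1*b0))/2 + (GF*(a1*b1) + GT*(a0*b1))/2)/2"
proof -
  have "((GF*(a0*b0) + GT*(a1*b0))/2 + (GF*(a1*b1) + GT*(a0*b1))/2)/2
      = ((a0*b0+a1*b1)*GF + (a1*b0+a0*b1)*GT)/4" by (simp add: field_simps)
  also have "\<dots> = (a0+a1)*(b0+b1)*F/4" by (simp only: H)
  also have "\<dots> = F * ((a0+a1)/2 * ((b0+b1)/2))" by (simp add: field_simps)
  finally show ?thesis by (rule sym)
qed

lemma sum4: fixes p q r s :: "'a \<Rightarrow> 'a \<Rightarrow> real"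
  shows "(\<Sum>x\<in>A. \<Sum>y\<in>A. ((p x y + q x y)/2 + (r x y + s x y)/2)/2)
   = (((\<Sum>x\<in>A. \<Sum>y\<in>A. p x y) + (\<Sum>x\<in>A. \<Sum>y\<in>A. q x y))/2 + ((\<Sum>x\<in>A. \<Sum>y\<in>A. r x y) + (\<Sum>x\<in>A. \<Sum>y\<in>A. s x y))/2)/2"
proof -
  have e: "((p x y + q x y)/2 + (r x y + s x y)/2)/2 = p x y/4 + q x y/4 + r x y/4 + s x y/4" for x y by (simp add: field_simps)
  show ?thesis unfolding e by (simp add: sum.distrib sum_divide_distrib[symmetric]) (simp add: field_simps)
qed

lemma Gk_abs: "Gk g (\<bar>a\<bar>) (\<bar>b\<bar>) = Gk g a b" by (simp add: Gk_def abs_mult)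

lemma plus_step:
  fixes g :: "real \<Rightarrow> real" and U :: "'y pout bdmc"
  assumes f: "\<And>b. finite (set_pmf (U b))"
  shows "measure_pmf.expectation (q_ch (plus_ch U)) (\<lambda>z. g \<bar>Delta (plus_ch U) z\<bar>)
     = measure_pmf.expectation (q_ch U) (\<lambda>y1. measure_pmf.expectation (q_ch U) (\<lambda>y2. Fk g \<bar>Delta U y1\<bar> \<bar>Delta U y2\<bar>))"
proof -
  define A where "A = set_pmf (U False) \<union> set_pmf (U True)"
  have fA: "finite A" using f by (simp add: A_def)
  have sA: "set_pmf (U c) \<subseteq> A" for c by (cases c) (auto simp: A_def)
  have sQ: "set_pmf (q_ch U) \<subseteq> A" by (simp add: set_q A_def)
  have f2: "finite (set_pmf (U False))" "finite (set_pmf (U True))" using f by auto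
  define pa where "pa y = pmf (U False) y" for y
  define pb where "pb y = pmf (U True) y" for y
  define h where "h z = g \<bar>Delta (plus_ch U) z\<bar>" for z
  define GF where "GF y1 y2 = g \<bar>(pa y1*pa y2/2 - pb y1*pb y2/2)/(pa y1*pa y2/2 + pb y1*pb y2/2)\<bar>" for y1 y2
  define GT where "GT y1 y2 = g \<bar>(pb y1*pa y2/2 - pa y1*pb y2/2)/(pb y1*pa y2/2 + pa y1*pb y2/2)\<bar>" for y1 y2
  have hF: "h (PlusOut y1 y2 False) = GF y1 y2" for y1 y2
    by (simp add: h_def GF_def Delta_def pmf_plus pa_def pb_def)
  have hT: "h (PlusOut y1 y2 True) = GT y1 y2" for y1 y2
    by (simp add: h_def GT_def Delta_def pmf_plus pa_def pb_def)
  have "measure_pmf.expectation (q_ch (plus_ch U)) h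
     = (measure_pmf.expectation (plus_ch U False) h + measure_pmf.expectation (plus_ch U True) h)/2"
    by (rule qch_exp) (rule fin_plus[OF f2])
  also have "\<dots> = (((\<Sum>y1\<in>A. \<Sum>y2\<in>A. GF y1 y2 * (pa y1 * pa y2)) + (\<Sum>y1\<in>A. \<Sum>y2\<in>A. GT y1 y2 * (pb y1 * pa y2)))/2
      + ((\<Sum>y1\<in>A. \<Sum>y2\<in>A. GF y1 y2 * (pb y1 * pb y2)) + (\<Sum>y1\<in>A. \<Sum>y2\<in>A. GT y1 y2 * (pa y1 * pb y2)))/2)/2"
    unfolding plus_exp[OF f2] hF hT
    by (simp add: dbl[OF fA sA fA sA] pa_def pb_def)
  also have "\<dots> = (\<Sum>y1\<in>A. \<Sum>y2\<in>A. ((GF y1 y2*(pa y1*pa y2) + GT y1 y2*(pb y1*pa y2))/2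
      + (GF y1 y2*(pb y1*pb y2) + GT y1 y2*(pa y1*pb y2))/2)/2)"
    by (rule sum4[symmetric])
  also have "\<dots> = (\<Sum>y1\<in>A. \<Sum>y2\<in>A. Fk g (Delta U y1) (Delta U y2) * ((pa y1 + pb y1)/2 * ((pa y2 + pb y2)/2)))"
  proof (intro sum.cong refl)
    fix y1 y2
    have H: "(pa y1*pa y2+pb y1*pb y2)*GF y1 y2 + (pb y1*pa y2+pa y1*pb y2)*GT y1 y2
       = (pa y1+pb y1)*(pa y2+pb y2)*Fk g (Delta U y1) (Delta U y2)"
      unfolding GF_def GT_def
      by (rule plus_alg[of "pa y1" "pb y1" "pa y2" "pb y2" g, unfolded Delta_def[symmetric] pa_def pb_def,
          folded pa_def pb_def]) (simp_all add: pa_def pb_def)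
    show "((GF y1 y2*(pa y1*pa y2) + GT y1 y2*(pb y1*pa y2))/2
      + (GF y1 y2*(pb y1*pb y2) + GT y1 y2*(pa y1*pb y2))/2)/2
      = Fk g (Delta U y1) (Delta U y2) * ((pa y1 + pb y1)/2 * ((pa y2 + pb y2)/2))"
      by (rule sym[OF point4[OF H]])
  qed
  also have "\<dots> = measure_pmf.expectation (q_ch U) (\<lambda>y1. measure_pmf.expectation (q_ch U) (\<lambda>y2. Fk g \<bar>Delta U y1\<bar> \<bar>Delta U y2\<bar>))"
    by (simp add: dbl[OF fA sQ fA sQ] pmf_q Fk_abs pa_def pb_def)
  finally show ?thesis unfolding h_def .
qed


lemma point4m:
  fixes a0 a1 b0 b1 G F :: real
  assumes H: "(a0*b0+a1*b1+a1*b0+a0*b1)*G = (a0+a1)*(b0+b1)*F"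
  shows "F * ((a0+a1)/2 * ((b0+b1)/2)) = ((G*(a0*b0) + G*(a1*b1))/2 + (G*(a1*b0) + G*(a0*b1))/2)/2"
proof -
  have "((G*(a0*b0) + G*(a1*b1))/2 + (G*(a1*b0) + G*(a0*b1))/2)/2
      = ((a0*b0+a1*b1+a1*b0+a0*b1)*G)/4" by (simp add: field_simps)
  also have "\<dots> = (a0+a1)*(b0+b1)*F/4" by (simp only: H)
  also have "\<dots> = F * ((a0+a1)/2 * ((b0+b1)/2))" by (simp add: field_simps)
  finally show ?thesis by (rule sym)
qed

lemma minus_step:
  fixes g :: "real \<Rightarrow> real" and U :: "'y pout bdmc"
  assumes f: "\<And>b. finite (set_pmf (U b))"
  shows "measure_pmf.expectation (q_ch (minus_ch U)) (\<lambda>z. g \<bar>Delta (minus_ch U) z\<bar>)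
     = measure_pmf.expectation (q_ch U) (\<lambda>y1. measure_pmf.expectation (q_ch U) (\<lambda>y2. Gk g \<bar>Delta U y1\<bar> \<bar>Delta U y2\<bar>))"
proof -
  define A where "A = set_pmf (U False) \<union> set_pmf (U True)"
  have fA: "finite A" using f by (simp add: A_def)
  have sA: "set_pmf (U c) \<subseteq> A" for c by (cases c) (auto simp: A_def)
  have sQ: "set_pmf (q_ch U) \<subseteq> A" by (simp add: set_q A_def)
  have f2: "finite (set_pmf (U False))" "finite (set_pmf (U True))" using f by auto
  define pa where "pa y = pmf (U False) y" for y
  define pb where "pb y = pmf (U True) y" for y
  define h where "h z = g \<bar>Delta (minus_ch U) z\<bar>" for z
  define GM where "GM y1 y2 = g \<bar>((pa y1*pa y2 + pb y1*pb y2)/2 - (pb y1*pa y2 + pa y1*pb y2)/2)/((pa y1*pa y2 + pb y1*pb y2)/2 + (pb y1*pa y2 + pa y1*pb y2)/2)\<bar>" for y1 y2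
  have hM: "h (MinusOut y1 y2) = GM y1 y2" for y1 y2
    by (simp add: h_def GM_def Delta_def pmf_minus pa_def pb_def)
  have "measure_pmf.expectation (q_ch (minus_ch U)) h
     = (measure_pmf.expectation (minus_ch U False) h + measure_pmf.expectation (minus_ch U True) h)/2"
    by (rule qch_exp) (rule fin_minus[OF f2])
  also have "\<dots> = (((\<Sum>y1\<in>A. \<Sum>y2\<in>A. GM y1 y2 * (pa y1 * pa y2)) + (\<Sum>y1\<in>A. \<Sum>y2\<in>A. GM y1 y2 * (pb y1 * pb y2)))/2
      + ((\<Sum>y1\<in>A. \<Sum>y2\<in>A. GM y1 y2 * (pb y1 * pa y2)) + (\<Sum>y1\<in>A. \<Sum>y2\<in>A. GM y1 y2 * (pa y1 * pb y2)))/2)/2"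
    unfolding minus_exp[OF f2] hM
    by (simp add: dbl[OF fA sA fA sA] pa_def pb_def)
  also have "\<dots> = (\<Sum>y1\<in>A. \<Sum>y2\<in>A. ((GM y1 y2*(pa y1*pa y2) + GM y1 y2*(pb y1*pb y2))/2
      + (GM y1 y2*(pb y1*pa y2) + GM y1 y2*(pa y1*pb y2))/2)/2)"
    by (rule sum4[symmetric])
  also have "\<dots> = (\<Sum>y1\<in>A. \<Sum>y2\<in>A. Gk g (Delta U y1) (Delta U y2) * ((pa y1 + pb y1)/2 * ((pa y2 + pb y2)/2)))"
  proof (intro sum.cong refl)
    fix y1 y2
    have H: "(pa y1*pa y2+pb y1*pb y2+pb y1*pa y2+pa y1*pb y2)*GM y1 y2
       = (pa y1+pb y1)*(pa y2+pb y2)*Gk g (Delta U y1) (Delta U y2)"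
      unfolding GM_def
      by (rule minus_alg[of "pa y1" "pb y1" "pa y2" "pb y2" g, unfolded Delta_def[symmetric] pa_def pb_def,
          folded pa_def pb_def]) (simp_all add: pa_def pb_def)
    show "((GM y1 y2*(pa y1*pa y2) + GM y1 y2*(pb y1*pb y2))/2
      + (GM y1 y2*(pb y1*pa y2) + GM y1 y2*(pa y1*pb y2))/2)/2
      = Gk g (Delta U y1) (Delta U y2) * ((pa y1 + pb y1)/2 * ((pa y2 + pb y2)/2))"
      by (rule sym[OF point4m[OF H]])
  qed
  also have "\<dots> = measure_pmf.expectation (q_ch U) (\<lambda>y1. measure_pmf.expectation (q_ch U) (\<lambda>y2. Gk g \<bar>Delta U y1\<bar> \<bar>Delta U y2\<bar>))"
    by (simp add: dbl[OF fA sQ fA sQ] pmf_q Gk_abs pa_def pb_def)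
  finally show ?thesis unfolding h_def .
qed



lemma Delta_bound: "\<bar>Delta W y\<bar> \<le> 1"
proof -
  have p0: "pmf (W False) y \<ge> 0" and p1: "pmf (W True) y \<ge> 0" by auto
  show ?thesis
  proof (cases "pmf (W False) y + pmf (W True) y = 0")
    case True then show ?thesis by (simp add: Delta_def)
  next
    case False
    then have pos: "pmf (W False) y + pmf (W True) y > 0" using p0 p1 by linarith
    have "\<bar>pmf (W False) y - pmf (W True) y\<bar> \<le> pmf (W False) y + pmf (W True) y" using p0 p1 by linarith
    then show ?thesis using pos by (simp add: Delta_def abs_divide divide_le_eq_1)
  qed
qed

lemma law_exp: "measure_pmf.expectation (absDelta_law U) (g :: real \<Rightarrow> real) = measure_pmf.expectation (q_ch U) (\<lambda>y. g \<bar>Delta U y\<bar>)"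
  unfolding absDelta_law_def by (rule integral_map_pmf)

lemma law_good:
  assumes "\<And>b. finite (set_pmf (U b))"
  shows "good (absDelta_law U)"
  using assms Delta_bound[of U] by (auto simp: good_def absDelta_law_def set_q abs_le_iff)

lemma law_step:
  fixes U :: "'y pout bdmc" and U' :: "'z pout bdmc"
  assumes fU: "\<And>b. finite (set_pmf (U b))" and fU': "\<And>b. finite (set_pmf (U' b))"
    and o: "ordC (absDelta_law U) (absDelta_law U')"
  shows "ordC (absDelta_law (pol_step U c)) (absDelta_law (pol_step U' c))"
  unfolding ordC_def
proof (intro allI impI)
  fix g assume g: "Cls g"
  have X: "good (absDelta_law U)" and Y: "good (absDelta_law U')" by (rule law_good, rule fU, rule law_good, rule fU')
  show "measure_pmf.expectation (absDelta_law (pol_step U c)) g \<le> measure_pmf.expectation (absDelta_law (pol_step U' c)) g"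
  proof (cases c)
    case SPlus
    have "measure_pmf.expectation (absDelta_law U) (\<lambda>a. measure_pmf.expectation (absDelta_law U) (\<lambda>b. Fk g a b))
      \<le> measure_pmf.expectation (absDelta_law U') (\<lambda>a. measure_pmf.expectation (absDelta_law U') (\<lambda>b. Fk g a b))"
      by (rule ordC_step[OF X Y o]) (auto intro: Fk_Cls[OF g] Fk_sym)
    moreover have "measure_pmf.expectation (absDelta_law (pol_step U c)) g
       = measure_pmf.expectation (absDelta_law U) (\<lambda>a. measure_pmf.expectation (absDelta_law U) (\<lambda>b. Fk g a b))"
      unfolding law_exp SPlus pol_step_def polsign.case by (rule plus_step[OF fU])
    moreover have "measure_pmf.expectation (absDelta_law (pol_step U' c)) g
       = measure_pmf.expectation (absDelta_law U') (\<lambda>a. measure_pmf.expectation (absDelta_law U') (\<lambda>b. Fk g a b))"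
      unfolding law_exp SPlus pol_step_def polsign.case by (rule plus_step[OF fU'])
    ultimately show ?thesis by simp
  next
    case SMinus
    have "measure_pmf.expectation (absDelta_law U) (\<lambda>a. measure_pmf.expectation (absDelta_law U) (\<lambda>b. Gk g a b))
      \<le> measure_pmf.expectation (absDelta_law U') (\<lambda>a. measure_pmf.expectation (absDelta_law U') (\<lambda>b. Gk g a b))"
      by (rule ordC_step[OF X Y o]) (auto intro: Gk_Cls[OF g] Gk_sym)
    moreover have "measure_pmf.expectation (absDelta_law (pol_step U c)) g
       = measure_pmf.expectation (absDelta_law U) (\<lambda>a. measure_pmf.expectation (absDelta_law U) (\<lambda>b. Gk g a b))"
      unfolding law_exp SMinus pol_step_def polsign.case by (rule minus_step[OF fU])
    moreover have "measure_pmf.expectation (absDelta_law (pol_step U' c)) g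
       = measure_pmf.expectation (absDelta_law U') (\<lambda>a. measure_pmf.expectation (absDelta_law U') (\<lambda>b. Gk g a b))"
      unfolding law_exp SMinus pol_step_def polsign.case by (rule minus_step[OF fU'])
    ultimately show ?thesis by simp
  qed
qed

lemma polarize_snoc: "polarize W (s @ [c]) = pol_step (polarize W s) c"
  by (simp add: polarize_def)

lemma pol_fin:
  assumes "is_bdmc W"
  shows "finite (set_pmf (polarize W s b))"
proof (induction s arbitrary: b rule: rev_induct)
  case Nil
  have "finite (set_pmf (W c))" for c using assms by (cases c) (auto simp: is_bdmc_def)
  then show ?case by (simp add: polarize_def lift_ch_def)
next
  case (snoc c s)
  have f2: "finite (set_pmf (polarize W s False))" "finite (set_pmf (polarize W s True))" using snoc by auto
  show ?case unfolding polarize_snoc pol_step_def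
    by (cases c) (auto intro: fin_plus[OF f2] fin_minus[OF f2])
qed

lemma law_lift: "absDelta_law (lift_ch W) = absDelta_law W"
proof -
  have inj: "inj Base" by (auto intro: injI)
  have q: "q_ch (lift_ch W) = map_pmf Base (q_ch W)"
    by (simp add: q_ch_def lift_ch_def map_bind_pmf)
  have d: "Delta (lift_ch W) (Base y) = Delta W y" for y
    by (simp add: Delta_def lift_ch_def pmf_map_inj'[OF inj])
  show ?thesis unfolding absDelta_law_def q map_pmf_comp by (simp add: d)
qed

lemma pol_ord:
  fixes W :: "'y bdmc" and V :: "'z bdmc"
  assumes W: "is_bdmc W" and V: "is_bdmc V"
    and o: "ordC (absDelta_law V) (absDelta_law W)"
  shows "ordC (absDelta_law (polarize V s)) (absDelta_law (polarize W s))"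
proof (induction s rule: rev_induct)
  case Nil
  then show ?case using o by (simp add: polarize_def law_lift)
next
  case (snoc c s)
  show ?case unfolding polarize_snoc
    by (rule law_step[OF pol_fin[OF V] pol_fin[OF W] snoc])
qed

theorem corollary1:
  fixes W :: "'y bdmc" and V :: "'z bdmc" and \<phi> :: "real \<Rightarrow> real" and \<epsilon> :: real and n :: nat
  assumes "is_bdmc W" and "is_bdmc V"
    and "icx_le (absDelta_law V) (absDelta_law W)"
    and "0 < \<epsilon>" and "\<epsilon> < 1"
    and "convex_on {0..1} \<phi>" and "mono_on {0..1} \<phi>" and "\<phi> 0 = 0" and "\<phi> 1 = 1"
    and "n \<ge> 1"
  shows "info_set n \<phi> \<epsilon> V \<subseteq> info_set n \<phi> \<epsilon> W"
proof
  fix s assume s: "s \<in> info_set n \<phi> \<epsilon> V"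
  have fW: "\<And>b. finite (set_pmf (W b))" using assms(1) by (auto simp: is_bdmc_def intro: bool.induct)
  have fV: "\<And>b. finite (set_pmf (V b))" using assms(2) by (auto simp: is_bdmc_def intro: bool.induct)
  have o0: "ordC (absDelta_law V) (absDelta_law W)"
    by (rule icx_ordC[OF law_good[OF fV] law_good[OF fW] assms(3)])
  have o: "ordC (absDelta_law (polarize V s)) (absDelta_law (polarize W s))"
    by (rule pol_ord[OF assms(1,2) o0])
  have c: "Cls \<phi>" using assms(6,7) by (simp add: Cls_def)
  have "measure_pmf.expectation (absDelta_law (polarize V s)) \<phi> \<le> measure_pmf.expectation (absDelta_law (polarize W s)) \<phi>"
    using o c unfolding ordC_def by blast
  then show "s \<in> info_set n \<phi> \<epsilon> W" using s by (auto simp: info_set_def law_exp)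
qed


end
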